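(* Let $R$ be any binary relation on $U$. Then $(\mathcal J_p(\wp(U)^{\vartriangle}),\subseteq)\cong(\mathcal J_p(\wp(U)^{\blacktriangle}),\supseteq)$. More precisely, the map $\varphi\colon R(x)\mapsto\breve R(w_x)$, where $w_x$ is any element of $\mathfrak{core}R(x)$, is a well-defined bijection $\mathcal J_p(\wp(U)^{\vartriangle})\to\mathcal J_p(\wp(U)^{\blacktriangle})$ which reverses inclusion, and its inverse is $\breve R(y)\mapsto R(w_y)$ with $w_y$ any element of $\mathfrak{core}\breve R(y)$, also inclusion-reversing.
   Context: Let $U$ be a set and $R\subseteq U\times U$ a binary relation. For $x\in U$, $R(x)=\{y\in U\mid (x,y)\in R\}$ and $\breve R(x)=\{y\in U\mid (y,x)\in R\}$. $\mathfrak{core}R(x)=\{w\in R(x)\mid \text{for all }y\in U,\ w\in R(y)\text{ implies }R(x)\subseteq R(y)\}$, and $\mathfrak{core}\breve R(x)$ is defined likewise with $\breve R$ in place of $R$. For $X\subseteq U$: $X^{\blacktriangle}=\{x\in U\mid R(x)\cap X\neq\emptyset\}$ and $X^{\vartriangle}=\{x\in U\mid \breve R(x)\cap X\neq\emptyset\}$, so $\{x\}^{\vartriangle}=R(x)$, $\{x\}^{\blacktriangle}=\breve R(x)$. $\wp(U)^{\blacktriangle}=\{X^{\blacktriangle}\mid X\subseteq U\}$, $\wp(U)^{\vartriangle}=\{X^{\vartriangle}\mid X\subseteq U\}$, complete lattices under $\subseteq$ with joins given by unions. An element $p$ of a complete lattice $L$ is completely join-prime if $p\le\bigvee X$ implies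 $p\le x$ for some $x\in X$, for every $X\subseteq L$; $\mathcal J_p(L)$ denotes the set of completely join-prime elements. *)

theory Defs
  imports Main
begin

text \<open>R(x) = {y. (x,y) \<in> R}; the inverse neighbourhood is Rn (converse R) x.\<close>
definition Rn :: "('a \<times> 'a) set \<Rightarrow> 'a \<Rightarrow> 'a set" where
  "Rn R x = {y. (x, y) \<in> R}"

definition core :: "'a set \<Rightarrow> ('a \<times> 'a) set \<Rightarrow> 'a \<Rightarrow> 'a set" where
  "core U R x = {w \<in> Rn R x. \<forall>y\<in>U. w \<in> Rn R y \<longrightarrow> Rn R x \<subseteq> Rn R y}"

definition upperB :: "'a set \<Rightarrow> ('a \<times> 'a) set \<Rightarrow> 'a set \<Rightarrow> 'a set" where
  "upperB U R X = {x \<in> U. Rn R x \<inter> X \<noteq> {}}"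

definition upperV :: "'a set \<Rightarrow> ('a \<times> 'a) set \<Rightarrow> 'a set \<Rightarrow> 'a set" where
  "upperV U R X = {x \<in> U. Rn (converse R) x \<inter> X \<noteq> {}}"

definition famB :: "'a set \<Rightarrow> ('a \<times> 'a) set \<Rightarrow> 'a set set" where
  "famB U R = {upperB U R X | X. X \<subseteq> U}"

definition famV :: "'a set \<Rightarrow> ('a \<times> 'a) set \<Rightarrow> 'a set set" where
  "famV U R = {upperV U R X | X. X \<subseteq> U}"

text \<open>Completely join-prime elements of a family of sets ordered by inclusion,
  whose joins are unions.\<close>
definition Jp :: "'a set set \<Rightarrow> 'a set set" where
  "Jp L = {p \<in> L. \<forall>X \<subseteq> L. p \<subseteq> \<Union>X \<longrightarrow> (\<exists>x\<in>X. p \<subseteq> x)}"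

end

theory Submission
  imports Defs
begin

definition FF :: "'a set \<Rightarrow> ('a \<times> 'a) set \<Rightarrow> 'a set \<Rightarrow> 'a set" where
  "FF U R p = Rn (converse R) (SOME w. \<exists>x\<in>U. p = Rn R x \<and> w \<in> core U R x)"

lemma famB_eq: "famB U R = famV U (converse R)"
  unfolding famB_def famV_def upperB_def upperV_def by simp

lemma upperV_img:
  assumes "R \<subseteq> U \<times> U" "X \<subseteq> U"
  shows "upperV U R X = (\<Union>x\<in>X. Rn R x)"
  using assms unfolding upperV_def Rn_def by auto

lemma Rn_famV:
  assumes "R \<subseteq> U \<times> U" "x \<in> U"
  shows "Rn R x \<in> famV U R"
proof -
  have "upperV U R {x} = Rn R x" using upperV_img[OF assms(1), of "{x}"] assms by simp
  thus ?thesis unfolding famV_def using assms(2) by blast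
qed

lemma Jp_char:
  assumes RU: "R \<subseteq> U \<times> U"
  shows "Jp (famV U R) = {Rn R x | x. x \<in> U \<and> core U R x \<noteq> {}}"
proof (intro equalityI subsetI)
  fix p assume p: "p \<in> Jp (famV U R)"
  then have pL: "p \<in> famV U R" and jp: "\<And>X. X \<subseteq> famV U R \<Longrightarrow> p \<subseteq> \<Union>X \<Longrightarrow> \<exists>x\<in>X. p \<subseteq> x"
    unfolding Jp_def by auto
  from pL obtain X where X: "X \<subseteq> U" "p = upperV U R X" unfolding famV_def by auto
  then have pu: "p = (\<Union>x\<in>X. Rn R x)" using upperV_img[OF RU] by simp
  have "(\<lambda>x. Rn R x) ` X \<subseteq> famV U R" using Rn_famV[OF RU] X by auto
  from jp[OF this] pu obtain x where x: "x \<in> X" "p \<subseteq> Rn R x" by auto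
  with pu have px: "p = Rn R x" by auto
  have xU: "x \<in> U" using x X by auto
  have "core U R x \<noteq> {}"
  proof
    assume ce: "core U R x = {}"
    have hh: "\<forall>w\<in>Rn R x. \<exists>y. y \<in> U \<and> w \<in> Rn R y \<and> \<not> Rn R x \<subseteq> Rn R y"
    proof
      fix w assume wx: "w \<in> Rn R x"
      have "w \<notin> core U R x" using ce by simp
      then show "\<exists>y. y \<in> U \<and> w \<in> Rn R y \<and> \<not> Rn R x \<subseteq> Rn R y"
        using wx unfolding core_def by auto
    qed
    obtain f where f: "\<forall>w\<in>Rn R x. f w \<in> U \<and> w \<in> Rn R (f w) \<and> \<not> Rn R x \<subseteq> Rn R (f w)"
      using bchoice[OF hh] by (elim exE)
    let ?Y = "(\<lambda>w. Rn R (f w)) ` Rn R x"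
    have Y1: "?Y \<subseteq> famV U R"
    proof
      fix S assume "S \<in> ?Y"
      then obtain w where "w \<in> Rn R x" "S = Rn R (f w)" by (elim imageE)
      then show "S \<in> famV U R" using f Rn_famV[OF RU] by simp
    qed
    have Y2: "p \<subseteq> \<Union>?Y"
    proof
      fix z assume "z \<in> p"
      then have "z \<in> Rn R x" using px by simp
      then have "z \<in> Rn R (f z)" using f by simp
      then show "z \<in> \<Union>?Y" using \<open>z \<in> Rn R x\<close> by blast
    qed
    obtain S where "S \<in> ?Y" "p \<subseteq> S" using jp[OF Y1 Y2] by (elim bexE)
    then obtain w where "w \<in> Rn R x" "p \<subseteq> Rn R (f w)" by (elim imageE) simp
    then show False using f px by simp
  qed
  then show "p \<in> {Rn R x | x. x \<in> U \<and> core U R x \<noteq> {}}" using px xU by blast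
next
  fix p assume "p \<in> {Rn R x | x. x \<in> U \<and> core U R x \<noteq> {}}"
  then obtain x w where px: "p = Rn R x" and xU: "x \<in> U" and w: "w \<in> core U R x" by blast
  have "\<exists>S\<in>X. p \<subseteq> S" if XL: "X \<subseteq> famV U R" and pX: "p \<subseteq> \<Union>X" for X
  proof -
    have wp: "w \<in> p" using w px unfolding core_def by auto
    then obtain S where S: "S \<in> X" "w \<in> S" using pX by auto
    then obtain Y where Y: "Y \<subseteq> U" "S = upperV U R Y" using XL unfolding famV_def by auto
    then obtain y where y: "y \<in> Y" "w \<in> Rn R y" using S upperV_img[OF RU] by auto
    then have "Rn R x \<subseteq> Rn R y" using w Y unfolding core_def by auto
    then have "p \<subseteq> S" using px y Y upperV_img[OF RU] by auto
    thus ?thesis using S by blast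
  qed
  then show "p \<in> Jp (famV U R)" unfolding Jp_def using Rn_famV[OF RU xU] px by blast
qed


lemma core_U:
  assumes "R \<subseteq> U \<times> U" "w \<in> core U R x" shows "w \<in> U"
  using assms unfolding core_def Rn_def by auto

lemma core_dual:
  assumes RU: "R \<subseteq> U \<times> U" and w: "w \<in> core U R x" and xU: "x \<in> U"
  shows "x \<in> core U (converse R) w"
proof -
  have wx: "w \<in> Rn R x" using w unfolding core_def by auto
  have "Rn (converse R) w \<subseteq> Rn (converse R) y" if yU: "y \<in> U" and xy: "x \<in> Rn (converse R) y" for y
  proof
    fix z assume "z \<in> Rn (converse R) w"
    then have zw: "(z, w) \<in> R" unfolding Rn_def by simp
    then have zU: "z \<in> U" using RU by blast
    have "Rn R x \<subseteq> Rn R z" using w zU zw unfolding core_def Rn_def by blast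
    moreover have "y \<in> Rn R x" using xy unfolding Rn_def by simp
    ultimately show "z \<in> Rn (converse R) y" unfolding Rn_def by blast
  qed
  moreover have "x \<in> Rn (converse R) w" using wx unfolding Rn_def by simp
  ultimately show ?thesis unfolding core_def by blast
qed

lemma core_order:
  assumes RU: "R \<subseteq> U \<times> U" and w: "w \<in> core U R x" and w': "w' \<in> core U R x'"
    and xU: "x \<in> U" and xU': "x' \<in> U"
  shows "Rn R x \<subseteq> Rn R x' \<longleftrightarrow> Rn (converse R) w' \<subseteq> Rn (converse R) w"
proof
  assume a: "Rn R x \<subseteq> Rn R x'"
  show "Rn (converse R) w' \<subseteq> Rn (converse R) w"
  proof
    fix z assume "z \<in> Rn (converse R) w'"
    then have z: "(z, w') \<in> R" unfolding Rn_def by auto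
    then have "z \<in> U" using RU by auto
    then have "Rn R x' \<subseteq> Rn R z" using w' z unfolding core_def Rn_def by auto
    moreover have "w \<in> Rn R x" using w unfolding core_def by auto
    ultimately show "z \<in> Rn (converse R) w" using a unfolding Rn_def by auto
  qed
next
  assume a: "Rn (converse R) w' \<subseteq> Rn (converse R) w"
  have "w' \<in> Rn R x'" using w' unfolding core_def by auto
  then have "x' \<in> Rn (converse R) w'" unfolding Rn_def by auto
  then have "w \<in> Rn R x'" using a unfolding Rn_def by auto
  then show "Rn R x \<subseteq> Rn R x'" using w xU' unfolding core_def by auto
qed

lemma FF_val:
  assumes RU: "R \<subseteq> U \<times> U" and xU: "x \<in> U" and w: "w \<in> core U R x"
  shows "FF U R (Rn R x) = Rn (converse R) w"
proof -
  let ?P = "\<lambda>w. \<exists>x'\<in>U. Rn R x = Rn R x' \<and> w \<in> core U R x'"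
  have "?P w" using xU w by blast
  then have "?P (SOME w. ?P w)" by (rule someI)
  then obtain x' where x': "x' \<in> U" "Rn R x = Rn R x'" "(SOME w. ?P w) \<in> core U R x'" by blast
  have "Rn (converse R) (SOME w. ?P w) = Rn (converse R) w"
    using core_order[OF RU w x'(3) xU x'(1)] core_order[OF RU x'(3) w x'(1) xU] x'(2) by blast
  thus ?thesis unfolding FF_def by simp
qed

lemma generic:
  assumes RU: "R \<subseteq> U \<times> U" and p: "p \<in> Jp (famV U R)"
  shows "FF U R p \<in> Jp (famV U (converse R)) \<and> FF U (converse R) (FF U R p) = p"
proof -
  have RU': "converse R \<subseteq> U \<times> U" using RU by auto
  obtain x w where px: "p = Rn R x" and xU: "x \<in> U" and w: "w \<in> core U R x"
    using p Jp_char[OF RU] by blast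
  have e: "FF U R p = Rn (converse R) w" using FF_val[OF RU xU w] px by simp
  have wU: "w \<in> U" using core_U[OF RU w] .
  have xc: "x \<in> core U (converse R) w" using core_dual[OF RU w xU] .
  have "FF U R p \<in> Jp (famV U (converse R))" using e Jp_char[OF RU'] wU xc by blast
  moreover have "FF U (converse R) (FF U R p) = p"
    using e FF_val[OF RU' wU xc] px by simp
  ultimately show ?thesis by blast
qed

lemma generic_order:
  assumes RU: "R \<subseteq> U \<times> U" and p: "p \<in> Jp (famV U R)" and p': "p' \<in> Jp (famV U R)"
  shows "p \<subseteq> p' \<longleftrightarrow> FF U R p' \<subseteq> FF U R p"
proof -
  obtain x w where px: "p = Rn R x" and xU: "x \<in> U" and w: "w \<in> core U R x"
    using p Jp_char[OF RU] by blast
  obtain x' w' where px': "p' = Rn R x'" and xU': "x' \<in> U" and w': "w' \<in> core U R x'"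
    using p' Jp_char[OF RU] by blast
  show ?thesis using core_order[OF RU w w' xU xU'] FF_val[OF RU xU w] FF_val[OF RU xU' w'] px px'
    by simp
qed

theorem mainTheorem9:
  fixes U :: "'a set" and R :: "('a \<times> 'a) set"
  assumes "R \<subseteq> U \<times> U"
  shows "\<exists>\<phi> \<psi>.
     (\<forall>p\<in>Jp (famV U R). \<exists>x\<in>U. p = Rn R x \<and> core U R x \<noteq> {}) \<and>
     (\<forall>q\<in>Jp (famB U R). \<exists>y\<in>U. q = Rn (converse R) y \<and> core U (converse R) y \<noteq> {}) \<and>
     (\<forall>x\<in>U. \<forall>w. Rn R x \<in> Jp (famV U R) \<longrightarrow> w \<in> core U R x \<longrightarrow>
          \<phi> (Rn R x) = Rn (converse R) w) \<and>
     (\<forall>y\<in>U. \<forall>w. Rn (converse R) y \<in> Jp (famB U R) \<longrightarrow> w \<in> core U (converse R) y \<longrightarrow>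
          \<psi> (Rn (converse R) y) = Rn R w) \<and>
     bij_betw \<phi> (Jp (famV U R)) (Jp (famB U R)) \<and>
     bij_betw \<psi> (Jp (famB U R)) (Jp (famV U R)) \<and>
     (\<forall>p\<in>Jp (famV U R). \<psi> (\<phi> p) = p) \<and>
     (\<forall>q\<in>Jp (famB U R). \<phi> (\<psi> q) = q) \<and>
     (\<forall>p\<in>Jp (famV U R). \<forall>p'\<in>Jp (famV U R). p \<subseteq> p' \<longleftrightarrow> \<phi> p' \<subseteq> \<phi> p) \<and>
     (\<forall>q\<in>Jp (famB U R). \<forall>q'\<in>Jp (famB U R). q \<subseteq> q' \<longleftrightarrow> \<psi> q' \<subseteq> \<psi> q)"
proof -
  have RU: "R \<subseteq> U \<times> U" by fact
  have RU': "converse R \<subseteq> U \<times> U" using RU by blast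
  have B: "Jp (famB U R) = Jp (famV U (converse R))" by (simp add: famB_eq)
  have c1: "\<forall>p\<in>Jp (famV U R). \<exists>x\<in>U. p = Rn R x \<and> core U R x \<noteq> {}"
  proof
    fix p assume "p \<in> Jp (famV U R)"
    then have "p \<in> {Rn R x | x. x \<in> U \<and> core U R x \<noteq> {}}" by (simp only: Jp_char[OF RU])
    then show "\<exists>x\<in>U. p = Rn R x \<and> core U R x \<noteq> {}" by blast
  qed
  have c2: "\<forall>q\<in>Jp (famB U R). \<exists>y\<in>U. q = Rn (converse R) y \<and> core U (converse R) y \<noteq> {}"
  proof
    fix p assume "p \<in> Jp (famB U R)"
    then have "p \<in> {Rn (converse R) x | x. x \<in> U \<and> core U (converse R) x \<noteq> {}}"
      by (simp only: B Jp_char[OF RU'])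
    then show "\<exists>x\<in>U. p = Rn (converse R) x \<and> core U (converse R) x \<noteq> {}" by blast
  qed
  have c3: "\<forall>x\<in>U. \<forall>w. Rn R x \<in> Jp (famV U R) \<longrightarrow> w \<in> core U R x \<longrightarrow>
          FF U R (Rn R x) = Rn (converse R) w"
  proof (intro ballI allI impI)
    fix x w assume "x \<in> U" "w \<in> core U R x"
    from FF_val[OF RU this] show "FF U R (Rn R x) = Rn (converse R) w" .
  qed
  have c4: "\<forall>y\<in>U. \<forall>w. Rn (converse R) y \<in> Jp (famB U R) \<longrightarrow> w \<in> core U (converse R) y \<longrightarrow>
          FF U (converse R) (Rn (converse R) y) = Rn R w"
  proof (intro ballI allI impI)
    fix y w assume "y \<in> U" "w \<in> core U (converse R) y"
    from FF_val[OF RU' this] show "FF U (converse R) (Rn (converse R) y) = Rn R w" by simp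
  qed
  have g1: "FF U R p \<in> Jp (famB U R)" "FF U (converse R) (FF U R p) = p"
    if "p \<in> Jp (famV U R)" for p
    using generic[OF RU that] B by simp_all
  have g2: "FF U (converse R) q \<in> Jp (famV U R)" "FF U R (FF U (converse R) q) = q"
    if "q \<in> Jp (famB U R)" for q
  proof -
    have "q \<in> Jp (famV U (converse R))" using B that by simp
    from generic[OF RU' this] show "FF U (converse R) q \<in> Jp (famV U R)"
      "FF U R (FF U (converse R) q) = q" by simp_all
  qed
  have b1: "bij_betw (FF U R) (Jp (famV U R)) (Jp (famB U R))"
    by (rule bij_betw_byWitness[where f'="FF U (converse R)"]) (simp_all add: g1 g2 image_subset_iff)
  have b2: "bij_betw (FF U (converse R)) (Jp (famB U R)) (Jp (famV U R))"
    by (rule bij_betw_byWitness[where f'="FF U R"]) (simp_all add: g1 g2 image_subset_iff)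
  have o1: "\<forall>p\<in>Jp (famV U R). \<forall>p'\<in>Jp (famV U R). p \<subseteq> p' \<longleftrightarrow> FF U R p' \<subseteq> FF U R p"
    by (intro ballI) (rule generic_order[OF RU])
  have o2: "\<forall>q\<in>Jp (famB U R). \<forall>q'\<in>Jp (famB U R). q \<subseteq> q' \<longleftrightarrow> FF U (converse R) q' \<subseteq> FF U (converse R) q"
  proof (intro ballI)
    fix q q' assume "q \<in> Jp (famB U R)" "q' \<in> Jp (famB U R)"
    then have "q \<in> Jp (famV U (converse R))" "q' \<in> Jp (famV U (converse R))" using B by simp_all
    from generic_order[OF RU' this] show "q \<subseteq> q' \<longleftrightarrow> FF U (converse R) q' \<subseteq> FF U (converse R) q" .
  qed
  have g1': "\<forall>p\<in>Jp (famV U R). FF U (converse R) (FF U R p) = p" using g1 by blast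
  have g2': "\<forall>q\<in>Jp (famB U R). FF U R (FF U (converse R) q) = q" using g2 by blast
  show ?thesis
    apply (rule exI[where x="FF U R"], rule exI[where x="FF U (converse R)"])
    apply (intro conjI)
    apply (rule c1)
    apply (rule c2)
    apply (rule c3)
    apply (rule c4)
    apply (rule b1)
    apply (rule b2)
    apply (rule g1')
    apply (rule g2')
    apply (rule o1)
    apply (rule o2)
    done
qed

end
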